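(* If a graph $G$ on $[n]$ is geometrically copious, then every vertex of $G$ has degree at least three.
   Context: Setup. $G\subseteq\binom{[n]}{2}$ is a simple graph on $[n]$, with $n\ge4$, and $G_i$ is the set of neighbours of $i$. The kinematic space $\mathcal K_G\subseteq\mathbb P^{|G|-1}$ is cut out by $\sum_{j\in G_i}s_{ij}=0$ for $i\in[n]$. $\mathcal H$ is the braid arrangement $\bigcup_{i<j}\{x_i=x_j\}$. Scattering correspondence. $$\mathcal V_G=\{(s,x)\in\mathbb P^{|G|-1}\times(\mathbb P^{n-1}\setminus\mathcal H): s\in\mathcal K_G,\ \textstyle\sum_{j\in G_i}s_{ij}/(x_i-x_j)=0\ \forall i\}.$$ Solutions in $x$ come in $\mathrm{PGL}(2)$-orbits, where $\mathrm{PGL}(2)$ acts by $x_i\mapsto(ax_i+b)/(cx_i+d)$. Each orbit corresponds to a point of the moduli space $\mathcal M_{0,n}$ of $n$ distinct points on $\mathbb P^1$, giving projections $\mathcal K_G\leftarrow\mathcal V_G\to\mathcal M_{0,n}$. Geometrically copious. $G$ is geometrically copious if $\mathcal V_G\to\mathcal M_{0,n}$ is dominant and the fiber of $\mathcal V_G\to\mathcal K_G$ over a generic point of $\mathcal K_G$ has dimension two in $\mathbb P^{n-1}$ (i.e. modulo $\mathrm{PGL}(2)$ this map is finite-to-one). *)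

theory Defs
  imports Complex_Main
begin

inductive poly_fun :: "(('i \<Rightarrow> complex) \<Rightarrow> complex) \<Rightarrow> bool" where
  pconst: "poly_fun (\<lambda>x. c)"
| pvar:   "poly_fun (\<lambda>x. x i)"
| padd:   "poly_fun p \<Longrightarrow> poly_fun q \<Longrightarrow> poly_fun (\<lambda>x. p x + q x)"
| pmult:  "poly_fun p \<Longrightarrow> poly_fun q \<Longrightarrow> poly_fun (\<lambda>x. p x * q x)"

definition zclosed :: "('i \<Rightarrow> complex) set \<Rightarrow> bool" where
  "zclosed A \<longleftrightarrow> (\<exists>P. (\<forall>p\<in>P. poly_fun p) \<and> A = {x. \<forall>p\<in>P. p x = 0})"

definition zcl :: "('i \<Rightarrow> complex) set \<Rightarrow> ('i \<Rightarrow> complex) set" where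
  "zcl S = \<Inter>{A. zclosed A \<and> S \<subseteq> A}"

definition zdense :: "('i \<Rightarrow> complex) set \<Rightarrow> bool" where
  "zdense S \<longleftrightarrow> zcl S = UNIV"

definition zirred :: "('i \<Rightarrow> complex) set \<Rightarrow> bool" where
  "zirred Z \<longleftrightarrow> zclosed Z \<and> Z \<noteq> {} \<and>
     (\<forall>A B. zclosed A \<longrightarrow> zclosed B \<longrightarrow> Z \<subseteq> A \<union> B \<longrightarrow> Z \<subseteq> A \<or> Z \<subseteq> B)"

definition zchain :: "('i \<Rightarrow> complex) set \<Rightarrow> (nat \<Rightarrow> ('i \<Rightarrow> complex) set) \<Rightarrow> nat \<Rightarrow> bool" where
  "zchain S Z k \<longleftrightarrow> (\<forall>j\<le>k. zirred (Z j)) \<and> (\<forall>j<k. Z j \<subset> Z (Suc j)) \<and> Z k \<subseteq> zcl S"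

definition has_zdim :: "('i \<Rightarrow> complex) set \<Rightarrow> nat \<Rightarrow> bool" where
  "has_zdim S d \<longleftrightarrow> (\<exists>Z. zchain S Z d) \<and> \<not> (\<exists>Z. zchain S Z (Suc d))"

text \<open>Dimension of a subset of projective space \<open>\<P>(\<complex>^I)\<close>, given by its affine cone
  (a scaling-invariant set of nonzero vectors): one less than the affine dimension of the cone.\<close>
definition has_pdim :: "('i \<Rightarrow> complex) set \<Rightarrow> nat \<Rightarrow> bool" where
  "has_pdim C d \<longleftrightarrow> has_zdim C (Suc d)"

definition simple_graph :: "'v set set \<Rightarrow> bool" where
  "simple_graph G \<longleftrightarrow> (\<forall>e\<in>G. card e = 2)"

definition nbrs :: "'v set set \<Rightarrow> 'v \<Rightarrow> 'v set" where
  "nbrs G i = {j. {i, j} \<in> G}"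

definition degree :: "'v set set \<Rightarrow> 'v \<Rightarrow> nat" where
  "degree G i = card (nbrs G i)"

text \<open>Affine cone over the kinematic space \<open>K_G\<close>: vectors \<open>s \<in> \<complex>^G\<close> (coordinates outside G are 0)
  satisfying momentum conservation.\<close>
definition kin_cone :: "'v set set \<Rightarrow> ('v set \<Rightarrow> complex) set" where
  "kin_cone G = {s. (\<forall>e. e \<notin> G \<longrightarrow> s e = 0) \<and> (\<forall>i. (\<Sum>j\<in>nbrs G i. s {i, j}) = 0)}"

definition distinct_pts :: "('v \<Rightarrow> complex) \<Rightarrow> bool" where
  "distinct_pts x \<longleftrightarrow> (\<forall>i j. i \<noteq> j \<longrightarrow> x i \<noteq> x j)"

definition scattering :: "'v set set \<Rightarrow> ('v set \<Rightarrow> complex) \<Rightarrow> ('v \<Rightarrow> complex) \<Rightarrow> bool" where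
  "scattering G s x \<longleftrightarrow> (\<forall>i. (\<Sum>j\<in>nbrs G i. s {i, j} / (x i - x j)) = 0)"

text \<open>Affine cone over the fiber of \<open>V_G \<rightarrow> K_G\<close> over \<open>[s]\<close>, inside \<open>\<P>^{n-1} \<setminus> \<H>\<close>.\<close>
definition scat_fiber :: "'v set set \<Rightarrow> ('v set \<Rightarrow> complex) \<Rightarrow> ('v \<Rightarrow> complex) set" where
  "scat_fiber G s = {x. distinct_pts x \<and> scattering G s x}"

text \<open>Configurations (with finite coordinates) lying in the image of \<open>V_G\<close>; its Zariski
  density in \<open>\<complex>^n\<close> is equivalent to dominance of \<open>V_G \<rightarrow> \<M>_{0,n}\<close>.\<close>
definition scat_image :: "'v set set \<Rightarrow> ('v \<Rightarrow> complex) set" where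
  "scat_image G = {x. distinct_pts x \<and> (\<exists>s\<in>kin_cone G. (\<exists>e. s e \<noteq> 0) \<and> scattering G s x)}"

definition geometrically_copious :: "'v set set \<Rightarrow> bool" where
  "geometrically_copious G \<longleftrightarrow>
     zdense (scat_image G) \<and>
     (\<exists>f. poly_fun f \<and> (\<exists>s0\<in>kin_cone G. (\<exists>e. s0 e \<noteq> 0) \<and> f s0 \<noteq> 0) \<and>
          (\<forall>s\<in>kin_cone G. (\<exists>e. s e \<noteq> 0) \<longrightarrow> f s \<noteq> 0 \<longrightarrow> has_pdim (scat_fiber G s) 2))"

end

theory Submission
  imports Defs
begin



definition upoly :: "(complex \<Rightarrow> complex) \<Rightarrow> bool" where
  "upoly f \<longleftrightarrow> (\<exists>n c. \<forall>z. f z = (\<Sum>i\<le>n. c i * z ^ i))"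

lemma upoly_const: "upoly (\<lambda>z. a)"
  unfolding upoly_def by (rule exI[of _ 0], rule exI[of _ "\<lambda>_. a"]) simp

lemma upoly_lin: "upoly (\<lambda>z. a + z * b)"
  unfolding upoly_def by (rule exI[of _ 1], rule exI[of _ "\<lambda>i. if i = 0 then a else b"]) simp

lemma sum_pad:
  fixes c :: "nat \<Rightarrow> complex"
  assumes "n \<le> N"
  shows "(\<Sum>i\<le>n. c i * z ^ i) = (\<Sum>i\<le>N. (if i \<le> n then c i else 0) * z ^ i)"
proof -
  have "(\<Sum>i\<le>N. (if i \<le> n then c i else 0) * z ^ i) = (\<Sum>i\<le>N. if i \<le> n then c i * z ^ i else 0)"
    by (intro sum.cong) auto
  also have "\<dots> = (\<Sum>i\<in>{..N} \<inter> {i. i \<le> n}. c i * z ^ i)"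
    by (simp add: sum.inter_restrict)
  also have "{..N} \<inter> {i. i \<le> n} = {..n}" using assms by auto
  finally show ?thesis by simp
qed

lemma upoly_add: "upoly f \<Longrightarrow> upoly g \<Longrightarrow> upoly (\<lambda>z. f z + g z)"
proof -
  assume "upoly f" "upoly g"
  then obtain n c m d where f: "\<forall>z. f z = (\<Sum>i\<le>n. c i * z ^ i)" and g: "\<forall>z. g z = (\<Sum>i\<le>m. d i * z ^ i)"
    unfolding upoly_def by blast
  have hh: "f z + g z = (\<Sum>i\<le>n+m. ((if i \<le> n then c i else 0) + (if i \<le> m then d i else 0)) * z ^ i)" for z
    using f g sum_pad[of n "n+m" c z] sum_pad[of m "n+m" d z]
    by (simp add: distrib_right sum.distrib)
  show ?thesis unfolding upoly_def by (rule exI, rule exI, rule allI, rule hh)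
qed

lemma upoly_cmult: "upoly f \<Longrightarrow> upoly (\<lambda>z. a * f z)"
proof -
  assume "upoly f"
  then obtain n c where f: "\<forall>z. f z = (\<Sum>i\<le>n. c i * z ^ i)" unfolding upoly_def by blast
  have hh: "a * f z = (\<Sum>i\<le>n. (a * c i) * z ^ i)" for z
    using f by (simp add: sum_distrib_left mult.assoc)
  show ?thesis unfolding upoly_def by (rule exI, rule exI, rule allI, rule hh)
qed

lemma upoly_zmult: "upoly f \<Longrightarrow> upoly (\<lambda>z. z * f z)"
proof -
  assume "upoly f"
  then obtain n c where f: "\<forall>z. f z = (\<Sum>i\<le>n. c i * z ^ i)" unfolding upoly_def by blast
  have hh: "z * f z = (\<Sum>i\<le>Suc n. (case i of 0 \<Rightarrow> 0 | Suc k \<Rightarrow> c k) * z ^ i)" for z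
  proof -
    have "(\<Sum>i\<le>Suc n. (case i of 0 \<Rightarrow> 0 | Suc k \<Rightarrow> c k) * z ^ i)
        = (case 0 of 0 \<Rightarrow> 0 | Suc k \<Rightarrow> c k) * z ^ 0 + (\<Sum>i\<le>n. (case Suc i of 0 \<Rightarrow> 0 | Suc k \<Rightarrow> c k) * z ^ Suc i)"
      by (rule sum.atMost_Suc_shift)
    also have "\<dots> = z * f z" using f by (simp add: sum_distrib_left mult_ac)
    finally show ?thesis by simp
  qed
  show ?thesis unfolding upoly_def by (rule exI, rule exI, rule allI, rule hh)
qed

lemma upoly_powmult: "upoly f \<Longrightarrow> upoly (\<lambda>z. z ^ k * f z)"
proof (induction k)
  case 0 then show ?case by simp
next
  case (Suc k)
  then have "upoly (\<lambda>z. z * (z ^ k * f z))" by (intro upoly_zmult)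
  then show ?case by (simp add: mult.assoc)
qed

lemma upoly_mult_sum: "upoly f \<Longrightarrow> upoly (\<lambda>z. f z * (\<Sum>i\<le>m. d i * z ^ i))"
proof (induction m)
  case 0 then show ?case using upoly_cmult[of f "d 0"] by (simp add: mult.commute)
next
  case (Suc m)
  have "upoly (\<lambda>z. f z * (\<Sum>i\<le>m. d i * z ^ i) + d (Suc m) * (z ^ Suc m * f z))"
    using Suc by (intro upoly_add upoly_cmult upoly_powmult)
  then show ?case by (simp add: distrib_left mult_ac)
qed

lemma upoly_mult: "upoly f \<Longrightarrow> upoly g \<Longrightarrow> upoly (\<lambda>z. f z * g z)"
proof -
  assume f: "upoly f" and "upoly g"
  then obtain m d where g: "\<forall>z. g z = (\<Sum>i\<le>m. d i * z ^ i)" unfolding upoly_def by blast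
  have "upoly (\<lambda>z. f z * (\<Sum>i\<le>m. d i * z ^ i))" using f by (rule upoly_mult_sum)
  then show ?thesis using g by simp
qed

lemma upoly_finite_roots:
  assumes "upoly f" "f a \<noteq> 0"
  shows "finite {z. f z = 0}"
proof -
  obtain n c where f: "\<forall>z. f z = (\<Sum>i\<le>n. c i * z ^ i)" using assms(1) unfolding upoly_def by blast
  have "\<exists>i\<le>n. c i \<noteq> 0"
  proof (rule ccontr)
    assume "\<not> (\<exists>i\<le>n. c i \<noteq> 0)"
    then have "f a = 0" using f by simp
    then show False using assms(2) by simp
  qed
  then have "finite {z. (\<Sum>i\<le>n. c i * z ^ i) = 0}" using polyfun_finite_roots by blast
  then show ?thesis using f by simp
qed

lemma poly_fun_line:
  assumes "poly_fun p"
  shows "upoly (\<lambda>z. p (\<lambda>j. u j + z * (w j - u j)))"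
  using assms
proof induction
  case (pconst c) then show ?case by (rule upoly_const)
next
  case (pvar i) then show ?case by (rule upoly_lin)
next
  case (padd p q) show ?case by (rule upoly_add[OF padd.IH])
next
  case (pmult p q) show ?case by (rule upoly_mult[OF pmult.IH])
qed

lemma poly_fun_domain:
  assumes "poly_fun p" "poly_fun q" "\<And>x. p x * q x = 0" "p u \<noteq> 0" "q w \<noteq> 0"
  shows False
proof -
  define L where "L = (\<lambda>(z::complex) j. u j + z * (w j - u j))"
  have L0: "L 0 = u" and L1: "L 1 = w" unfolding L_def by auto
  have up: "upoly (\<lambda>z. p (L z))" unfolding L_def by (rule poly_fun_line[OF assms(1)])
  have uq: "upoly (\<lambda>z. q (L z))" unfolding L_def by (rule poly_fun_line[OF assms(2)])
  have "p (L 0) \<noteq> 0" unfolding L0 by (rule assms(4))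
  then have f1: "finite {z. p (L z) = 0}" by (rule upoly_finite_roots[OF up])
  have "q (L 1) \<noteq> 0" unfolding L1 by (rule assms(5))
  then have f2: "finite {z. q (L z) = 0}" by (rule upoly_finite_roots[OF uq])
  have "finite ({z. p (L z) = 0} \<union> {z. q (L z) = 0})" using f1 f2 by (rule finite_UnI)
  then obtain z where "z \<notin> {z. p (L z) = 0} \<union> {z. q (L z) = 0}"
    using ex_new_if_finite[OF infinite_UNIV_char_0] by blast
  then have "p (L z) * q (L z) \<noteq> 0" by simp
  then show False using assms(3) by blast
qed



lemma poly_fun_diff: "poly_fun p \<Longrightarrow> poly_fun q \<Longrightarrow> poly_fun (\<lambda>x. p x - q x)"
proof -
  assume "poly_fun p" "poly_fun q"
  then have "poly_fun (\<lambda>x. p x + (\<lambda>x. -1) x * q x)"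
    by (intro poly_fun.intros)
  then show ?thesis by simp
qed

lemma poly_fun_prod: "finite S \<Longrightarrow> (\<And>l. l \<in> S \<Longrightarrow> poly_fun (f l)) \<Longrightarrow> poly_fun (\<lambda>x. \<Prod>l\<in>S. f l x)"
proof (induction S rule: finite_induct)
  case empty then show ?case by (simp add: poly_fun.pconst)
next
  case (insert a S)
  have "poly_fun (\<lambda>x. f a x * (\<Prod>l\<in>S. f l x))"
    using insert by (intro poly_fun.pmult) auto
  then show ?case using insert by simp
qed

lemma poly_fun_comp:
  assumes "poly_fun p" "\<And>i. poly_fun (\<lambda>u. F u i)"
  shows "poly_fun (\<lambda>u. p (F u))"
  using assms(1)
proof induction
  case (pconst c) then show ?case by (rule poly_fun.pconst)
next
  case (pvar i) then show ?case using assms(2) by simp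
next
  case (padd p q) then show ?case using poly_fun.padd[OF padd.IH] by simp
next
  case (pmult p q) then show ?case using poly_fun.pmult[OF pmult.IH] by simp
qed

lemma zclosed_def2: "zclosed A \<Longrightarrow> \<exists>P. (\<forall>p\<in>P. poly_fun p) \<and> A = {x. \<forall>p\<in>P. p x = 0}"
  by (simp add: zclosed_def)

lemma zclosed_zero: "poly_fun g \<Longrightarrow> zclosed {x. g x = 0}"
  unfolding zclosed_def by (intro exI[of _ "{g}"]) auto

lemma zclosed_empty: "zclosed {}"
  unfolding zclosed_def by (intro exI[of _ "{\<lambda>x. 1}"]) (auto intro: poly_fun.pconst)

lemma univ_irred:
  assumes "zclosed A" "zclosed B" "UNIV \<subseteq> A \<union> B"
  shows "A = UNIV \<or> B = UNIV"
proof (rule ccontr)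
  assume "\<not> (A = UNIV \<or> B = UNIV)"
  then obtain u w where u: "u \<notin> A" and w: "w \<notin> B" by auto
  obtain P where P: "\<forall>p\<in>P. poly_fun p" "A = {x. \<forall>p\<in>P. p x = 0}" using assms(1) zclosed_def2 by blast
  obtain Q where Q: "\<forall>p\<in>Q. poly_fun p" "B = {x. \<forall>p\<in>Q. p x = 0}" using assms(2) zclosed_def2 by blast
  obtain p where p: "p \<in> P" "p u \<noteq> 0" using u P by auto
  obtain q where q: "q \<in> Q" "q w \<noteq> 0" using w Q by auto
  have "p x * q x = 0" for x
  proof -
    have "x \<in> A \<or> x \<in> B" using assms(3) by blast
    then have "p x = 0 \<or> q x = 0" using P(2) Q(2) p(1) q(1) by blast
    then show ?thesis by simp
  qed
  moreover have "poly_fun p" using P(1) p(1) by blast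
  moreover have "poly_fun q" using Q(1) q(1) by blast
  ultimately show False using poly_fun_domain[of p q u w] p(2) q(2) by blast
qed

lemma zcl_sub: "S \<subseteq> zcl S" unfolding zcl_def by auto

lemma zcl_least: "zclosed A \<Longrightarrow> S \<subseteq> A \<Longrightarrow> zcl S \<subseteq> A" unfolding zcl_def by auto

lemma zcl_mono: "S \<subseteq> T \<Longrightarrow> zcl S \<subseteq> zcl T" unfolding zcl_def by auto

lemma zclosed_Inter: fixes F :: "('i \<Rightarrow> complex) set set" shows "(\<And>A. A \<in> F \<Longrightarrow> zclosed A) \<Longrightarrow> zclosed (\<Inter>F)"
proof -
  assume h: "\<And>A. A \<in> F \<Longrightarrow> zclosed A"
  define PP where "PP (A::('i \<Rightarrow> complex) set) = (SOME P. (\<forall>p\<in>P. poly_fun p) \<and> A = {x. \<forall>p\<in>P. p x = 0})" for A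
  have PP: "(\<forall>p\<in>PP A. poly_fun p) \<and> A = {x. \<forall>p\<in>PP A. p x = 0}" if "A \<in> F" for A
    unfolding PP_def by (rule someI_ex) (use h[OF that] zclosed_def in auto)
  have "\<Inter>F = {x. \<forall>p\<in>(\<Union>A\<in>F. PP A). p x = 0}"
  proof (intro set_eqI iffI)
    fix x assume x: "x \<in> \<Inter>F"
    have "p x = 0" if "A \<in> F" "p \<in> PP A" for A p
    proof -
      have "x \<in> A" using x that(1) by blast
      then have "x \<in> {x. \<forall>p\<in>PP A. p x = 0}" using PP[OF that(1)] by simp
      then show ?thesis using that(2) by simp
    qed
    then show "x \<in> {x. \<forall>p\<in>(\<Union>A\<in>F. PP A). p x = 0}" by simp
  next
    fix x assume x: "x \<in> {x. \<forall>p\<in>(\<Union>A\<in>F. PP A). p x = 0}"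
    have "x \<in> A" if "A \<in> F" for A
    proof -
      have h1: "\<forall>p\<in>PP A. p x = 0" using x that by simp
      have eq: "A = {x. \<forall>p\<in>PP A. p x = 0}" using PP[OF that] by blast
      show ?thesis using h1 by (subst eq) simp
    qed
    then show "x \<in> \<Inter>F" by simp
  qed
  moreover have "\<forall>p\<in>(\<Union>A\<in>F. PP A). poly_fun p" using PP by simp
  ultimately show ?thesis unfolding zclosed_def by blast
qed

lemma zclosed_zcl: "zclosed (zcl S)"
  unfolding zcl_def by (rule zclosed_Inter) auto

lemma zcl_empty: "zcl {} = {}"
  using zcl_least[OF zclosed_empty] by auto

definition pmap :: "(('j \<Rightarrow> complex) \<Rightarrow> ('i \<Rightarrow> complex)) \<Rightarrow> bool" where
  "pmap F \<longleftrightarrow> (\<forall>i. poly_fun (\<lambda>u. F u i))"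

lemma zclosed_vimage:
  assumes "zclosed A" "pmap F"
  shows "zclosed (F -` A)"
proof -
  obtain P where P: "\<forall>p\<in>P. poly_fun p" "A = {x. \<forall>p\<in>P. p x = 0}" using assms(1) zclosed_def2 by blast
  have "F -` A = {u. \<forall>q\<in>(\<lambda>p u. p (F u)) ` P. q u = 0}" using P by auto
  moreover have "\<forall>q\<in>(\<lambda>p u. p (F u)) ` P. poly_fun q"
  proof
    fix q assume "q \<in> (\<lambda>p u. p (F u)) ` P"
    then obtain p where "p \<in> P" "q = (\<lambda>u. p (F u))" by blast
    then show "poly_fun q" using P(1) assms(2) poly_fun_comp[of p F] unfolding pmap_def by simp
  qed
  ultimately show ?thesis unfolding zclosed_def by blast
qed

lemma zirred_image:
  assumes "pmap F"
  shows "zirred (zcl (range F))"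
  unfolding zirred_def
proof (intro conjI allI impI)
  show "zclosed (zcl (range F))" by (rule zclosed_zcl)
  show "zcl (range F) \<noteq> {}" using zcl_sub[of "range F"] by auto
next
  fix A B assume A: "zclosed A" and B: "zclosed B" and sub: "zcl (range F) \<subseteq> A \<union> B"
  have "UNIV \<subseteq> F -` A \<union> F -` B" using sub zcl_sub[of "range F"] by auto
  then have "F -` A = UNIV \<or> F -` B = UNIV"
    using univ_irred zclosed_vimage A B assms by metis
  then have "range F \<subseteq> A \<or> range F \<subseteq> B" by auto
  then show "zcl (range F) \<subseteq> A \<or> zcl (range F) \<subseteq> B" using zcl_least A B by metis
qed

lemma dense_open:
  assumes "zclosed C" "poly_fun h" "h u0 \<noteq> 0" "\<And>u. h u \<noteq> 0 \<Longrightarrow> u \<in> C"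
  shows "C = UNIV"
proof -
  have "UNIV \<subseteq> C \<union> {u. h u = 0}" using assms(4) by auto
  then have "C = UNIV \<or> {u. h u = 0} = UNIV" using univ_irred assms(1) zclosed_zero[OF assms(2)] by blast
  then show ?thesis using assms(3) by auto
qed


lemma poly_fun_var: "poly_fun (\<lambda>x. x i)" by (rule poly_fun.pvar)
lemma poly_fun_const: "poly_fun (\<lambda>x. c)" by (rule poly_fun.pconst)

definition mob :: "'v \<Rightarrow> ('v \<Rightarrow> complex) \<Rightarrow> (nat \<Rightarrow> complex) \<Rightarrow> 'v \<Rightarrow> complex" where
  "mob i x0 u = (\<lambda>k. if k = i then u 0 else (u 2 * x0 k + u 1) * (\<Prod>l\<in>UNIV - {i, k}. u 3 * x0 l + 1))"

lemma mob_i[simp]: "mob i x0 u i = u 0" by (simp add: mob_def)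
lemma mob_k: "k \<noteq> i \<Longrightarrow> mob i x0 u k = (u 2 * x0 k + u 1) * (\<Prod>l\<in>UNIV - {i, k}. u 3 * x0 l + 1)"
  by (simp add: mob_def)

lemma pmap_mob: "pmap (mob i (x0::'v::finite \<Rightarrow> complex))"
  unfolding pmap_def
proof
  fix k
  show "poly_fun (\<lambda>u. mob i x0 u k)"
  proof (cases "k = i")
    case True then show ?thesis by (simp add: poly_fun.pvar)
  next
    case False
    have "poly_fun (\<lambda>u::nat \<Rightarrow> complex. (u 2 * x0 k + u 1) * (\<Prod>l\<in>UNIV - {i, k}. u 3 * x0 l + 1))"
      by (intro poly_fun.pmult poly_fun.padd poly_fun_prod poly_fun.pvar poly_fun.pconst) auto
    then show ?thesis using False by (simp add: mob_k)
  qed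
qed

definition spec :: "('v \<Rightarrow> complex) \<Rightarrow> 'v \<Rightarrow> nat \<Rightarrow> (nat \<Rightarrow> complex) \<Rightarrow> nat \<Rightarrow> complex" where
  "spec x0 i j u = (\<lambda>n. if n < j then u n else if n = 0 then x0 i else if n = 2 then 1 else 0)"

lemma spec_spec: "spec x0 i (Suc j) (spec x0 i j u) = spec x0 i j u"
  unfolding spec_def by auto

lemma pmap_spec_mob: "pmap (\<lambda>u. mob i (x0::'v::finite \<Rightarrow> complex) (spec x0 i j u))"
  unfolding pmap_def
proof
  fix k
  have "poly_fun (\<lambda>u. spec x0 i j u n)" for n
    by (cases "n < j") (simp_all add: spec_def poly_fun.pvar poly_fun.pconst)
  then show "poly_fun (\<lambda>u. mob i x0 (spec x0 i j u) k)"
    using poly_fun_comp[of "\<lambda>v. mob i x0 v k" "spec x0 i j"] pmap_mob[of i x0] unfolding pmap_def by blast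
qed

lemma strict_step:
  assumes "range F \<subseteq> range F'" "poly_fun g" "\<And>u. g (F u) = 0" "g (F' ua) \<noteq> 0"
  shows "zcl (range F) \<subset> zcl (range F')"
proof
  show "zcl (range F) \<subseteq> zcl (range F')" using assms(1) by (rule zcl_mono)
  have "zcl (range F) \<subseteq> {y. g y = 0}" using assms(3) by (intro zcl_least zclosed_zero assms(2)) auto
  moreover have "F' ua \<in> zcl (range F')" using zcl_sub by blast
  ultimately show "zcl (range F) \<noteq> zcl (range F')" using assms(4) by blast
qed

lemma range_spec: "range (\<lambda>u. mob i x0 (spec x0 i j u)) \<subseteq> range (\<lambda>u. mob i x0 (spec x0 i (Suc j) u))"
proof
  fix y assume "y \<in> range (\<lambda>u. mob i x0 (spec x0 i j u))"
  then obtain u where "y = mob i x0 (spec x0 i j u)" by blast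
  then have "y = mob i x0 (spec x0 i (Suc j) (spec x0 i j u))" by (simp add: spec_spec)
  then show "y \<in> range (\<lambda>u. mob i x0 (spec x0 i (Suc j) u))" by blast
qed



lemma not_self_nbr: "simple_graph G \<Longrightarrow> j \<notin> nbrs G j"
  unfolding simple_graph_def nbrs_def by force

lemma nbr_ne: "simple_graph G \<Longrightarrow> m \<in> nbrs G j \<Longrightarrow> m \<noteq> j"
  using not_self_nbr[of G j] by blast

lemma edge_zero:
  fixes G :: "'v::finite set set"
  assumes sg: "simple_graph G" and s: "s \<in> kin_cone G" and x0: "x0 \<in> scat_fiber G s"
    and deg: "degree G i < 3"
  shows "s {i, m} = 0"
proof (cases "m \<in> nbrs G i")
  case False
  then have "{i, m} \<notin> G" by (simp add: nbrs_def)
  then show ?thesis using s by (simp add: kin_cone_def)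
next
  case True
  have mom: "(\<Sum>j\<in>nbrs G i. s {i, j}) = 0" using s by (simp add: kin_cone_def)
  have sc: "(\<Sum>j\<in>nbrs G i. s {i, j} / (x0 i - x0 j)) = 0" using x0 by (simp add: scat_fiber_def scattering_def)
  have dist: "distinct_pts x0" using x0 by (simp add: scat_fiber_def)
  have c: "card (nbrs G i) < 3" using deg by (simp add: degree_def)
  have fin: "finite (nbrs G i)" by simp
  have "card (nbrs G i) \<noteq> 0" using True fin by auto
  then have "card (nbrs G i) = 1 \<or> card (nbrs G i) = 2" using c by linarith
  then show ?thesis
  proof
    assume "card (nbrs G i) = 1"
    then obtain j where "nbrs G i = {j}" using card_1_singletonE by blast
    then show ?thesis using True mom by simp
  next
    assume "card (nbrs G i) = 2"
    then obtain j k where jk: "nbrs G i = {j, k}" "j \<noteq> k" by (meson card_2_iff)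
    have ij: "i \<noteq> j" "i \<noteq> k" using jk nbr_ne[OF sg, of _ i] by auto
    have d1: "x0 i - x0 j \<noteq> 0" "x0 i - x0 k \<noteq> 0" "x0 j - x0 k \<noteq> 0"
      using dist ij jk(2) unfolding distinct_pts_def by auto
    have e1: "s {i, j} + s {i, k} = 0" using mom jk by simp
    have e2: "s {i, j} / (x0 i - x0 j) + s {i, k} / (x0 i - x0 k) = 0" using sc jk by simp
    have "s {i, k} = - s {i, j}" using e1 by (simp add: eq_neg_iff_add_eq_0 add.commute)
    then have "s {i, j} / (x0 i - x0 j) - s {i, j} / (x0 i - x0 k) = 0" using e2 by simp
    moreover have "s {i, j} / (x0 i - x0 j) - s {i, j} / (x0 i - x0 k)
       = s {i, j} * ((x0 i - x0 k) - (x0 i - x0 j)) / ((x0 i - x0 j) * (x0 i - x0 k))"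
      using d1(1,2) by (simp add: field_simps)
    ultimately have "s {i, j} * ((x0 i - x0 k) - (x0 i - x0 j)) = 0" using d1(1,2) by simp
    then have "s {i, j} * (x0 j - x0 k) = 0" by simp
    then have sj: "s {i, j} = 0" using d1 by simp
    then have "s {i, k} = 0" using e1 by simp
    then show ?thesis using sj True jk by auto
  qed
qed



lemma alg1:
  fixes a b c xk xm R :: complex
  assumes "c * xk + 1 \<noteq> 0" "c * xm + 1 \<noteq> 0"
  shows "(a * xk + b) * R / (c * xk + 1) - (a * xm + b) * R / (c * xm + 1)
       = R * (a - b * c) * (xk - xm) / ((c * xk + 1) * (c * xm + 1))"
  using assms by (simp add: field_simps)

lemma alg2:
  fixes a b c xj xm R s :: complex
  assumes "c * xj + 1 \<noteq> 0" "c * xm + 1 \<noteq> 0" "R \<noteq> 0" "a - b * c \<noteq> 0" "xj - xm \<noteq> 0"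
  shows "s / (R * (a - b * c) * (xj - xm) / ((c * xj + 1) * (c * xm + 1)))
       = (c * xj + 1) / (R * (a - b * c)) * ((c * xj + 1) * (s / (xj - xm)) - c * s)"
  using assms by (simp add: field_simps)


lemma mob_formula:
  fixes x0 :: "'v::finite \<Rightarrow> complex"
  assumes "k \<noteq> i"
  shows "mob i x0 u k * (u 3 * x0 k + 1) = (u 2 * x0 k + u 1) * (\<Prod>l\<in>UNIV - {i}. u 3 * x0 l + 1)"
proof -
  have e: "UNIV - {i} = insert k (UNIV - {i, k})" using assms by auto
  have "(\<Prod>l\<in>UNIV - {i}. u 3 * x0 l + 1) = (u 3 * x0 k + 1) * (\<Prod>l\<in>UNIV - {i, k}. u 3 * x0 l + 1)"
    unfolding e by (subst prod.insert) auto
  then show ?thesis using assms by (simp add: mob_k mult_ac)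
qed

lemma mob_formula2:
  fixes x0 :: "'v::finite \<Rightarrow> complex"
  assumes "k \<noteq> i" "u 3 * x0 k + 1 \<noteq> 0"
  shows "mob i x0 u k = (u 2 * x0 k + u 1) * (\<Prod>l\<in>UNIV - {i}. u 3 * x0 l + 1) / (u 3 * x0 k + 1)"
  using mob_formula[OF assms(1), of x0 u] assms(2) by (simp add: eq_divide_eq)

lemma mob_in_fiber:
  fixes G :: "'v::finite set set"
  assumes sg: "simple_graph G" and s: "s \<in> kin_cone G" and x0: "x0 \<in> scat_fiber G s"
    and ez: "\<And>m. s {i, m} = 0"
    and det: "u 2 - u 1 * u 3 \<noteq> 0"
    and nz: "\<And>l. l \<noteq> i \<Longrightarrow> u 3 * x0 l + 1 \<noteq> 0"
    and tz: "\<And>k. k \<noteq> i \<Longrightarrow> u 0 \<noteq> mob i x0 u k"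
  shows "mob i x0 u \<in> scat_fiber G s"
proof -
  define R where "R = (\<Prod>l\<in>UNIV - {i}. u 3 * x0 l + 1)"
  define a where "a = u 2"
  define b where "b = u 1"
  define c where "c = u 3"
  define y where "y = mob i x0 u"
  have R0: "R \<noteq> 0" unfolding R_def using nz by (simp add: prod_zero_iff)
  have dist: "distinct_pts x0" using x0 by (simp add: scat_fiber_def)
  have nz': "c * x0 l + 1 \<noteq> 0" if "l \<noteq> i" for l using nz[OF that] by (simp add: c_def)
  have det': "a - b * c \<noteq> 0" using det by (simp add: a_def b_def c_def)
  have yk: "y k = (a * x0 k + b) * R / (c * x0 k + 1)" if "k \<noteq> i" for k
    unfolding y_def a_def b_def c_def R_def using mob_formula2[of k i u x0, OF that nz[OF that]] by simp
  have ydiff: "y k - y m = R * (a - b * c) * (x0 k - x0 m) / ((c * x0 k + 1) * (c * x0 m + 1))"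
    if "k \<noteq> i" "m \<noteq> i" for k m
    unfolding yk[OF that(1)] yk[OF that(2)] by (rule alg1[OF nz'[OF that(1)] nz'[OF that(2)]])
  have ydist: "distinct_pts y"
    unfolding distinct_pts_def
  proof (intro allI impI)
    fix k m :: 'v assume km: "k \<noteq> m"
    show "y k \<noteq> y m"
    proof (cases "k = i \<or> m = i")
      case True
      then show ?thesis using tz km unfolding y_def by (metis mob_i)
    next
      case False
      then have "x0 k - x0 m \<noteq> 0" using dist km unfolding distinct_pts_def by auto
      then have "y k - y m \<noteq> 0" using False ydiff[of k m] R0 det' nz'[of k] nz'[of m] by simp
      then show ?thesis by simp
    qed
  qed
  have scat: "(\<Sum>m\<in>nbrs G j. s {j, m} / (y j - y m)) = 0" for j
  proof (cases "j = i")
    case True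
    then show ?thesis using ez by simp
  next
    case False
    define K where "K = (c * x0 j + 1) / (R * (a - b * c))"
    have hterm: "s {j, m} / (y j - y m) = K * ((c * x0 j + 1) * (s {j, m} / (x0 j - x0 m)) - c * s {j, m})"
      if m: "m \<in> nbrs G j" for m
    proof (cases "m = i")
      case True
      then have "s {j, m} = 0" using ez[of j] by (simp add: insert_commute)
      then show ?thesis by simp
    next
      case mi: False
      have "m \<noteq> j" using nbr_ne[OF sg m] .
      then have xd: "x0 j - x0 m \<noteq> 0" using dist unfolding distinct_pts_def by auto
      show ?thesis unfolding ydiff[OF False mi] K_def
        by (rule alg2[OF nz'[OF False] nz'[OF mi] R0 det' xd])
    qed
    have "(\<Sum>m\<in>nbrs G j. s {j, m} / (y j - y m))
        = (\<Sum>m\<in>nbrs G j. K * ((c * x0 j + 1) * (s {j, m} / (x0 j - x0 m)) - c * s {j, m}))"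
      using hterm by (rule sum.cong[OF refl])
    also have "\<dots> = K * ((c * x0 j + 1) * (\<Sum>m\<in>nbrs G j. s {j, m} / (x0 j - x0 m)) - c * (\<Sum>m\<in>nbrs G j. s {j, m}))"
      by (simp add: sum_subtractf sum_distrib_left right_diff_distrib)
    also have "(\<Sum>m\<in>nbrs G j. s {j, m} / (x0 j - x0 m)) = 0"
      using x0 by (simp add: scat_fiber_def scattering_def)
    also have "(\<Sum>m\<in>nbrs G j. s {j, m}) = 0"
      using s by (simp add: kin_cone_def)
    finally show ?thesis by simp
  qed
  show ?thesis unfolding scat_fiber_def scattering_def using ydist scat y_def by simp
qed



lemma three_pts:
  fixes x0 :: "'v::finite \<Rightarrow> complex"
  assumes card: "card (UNIV :: 'v set) \<ge> 4" and dist: "distinct_pts x0"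
  shows "\<exists>k1 k2 k3. k1 \<noteq> i \<and> k2 \<noteq> i \<and> k3 \<noteq> i \<and> k1 \<noteq> k2 \<and> k1 \<noteq> k3 \<and> k2 \<noteq> k3 \<and> x0 k3 \<noteq> 0"
proof -
  have c1: "card (UNIV - {i}) \<ge> 3" using card by (simp add: card_Diff_singleton)
  then obtain a where a: "a \<in> UNIV - {i}" by (metis all_not_in_conv card.empty not_numeral_le_zero)
  have c2: "card (UNIV - {i} - {a}) \<ge> 2" using c1 a by (simp add: card_Diff_singleton)
  then obtain b where b: "b \<in> UNIV - {i} - {a}" by (metis all_not_in_conv card.empty not_numeral_le_zero)
  have c3: "card (UNIV - {i} - {a} - {b}) \<ge> 1" using c2 b by (simp add: card_Diff_singleton)
  then obtain c where c: "c \<in> UNIV - {i} - {a} - {b}" by (metis all_not_in_conv card.empty not_one_le_zero)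
  show ?thesis
  proof (cases "x0 a = 0")
    case True
    have "b \<noteq> a" using b by auto
    then have "x0 b \<noteq> 0" using dist True unfolding distinct_pts_def by metis
    then show ?thesis using a b c by (intro exI[of _ a] exI[of _ c] exI[of _ b]) auto
  next
    case False
    then show ?thesis using a b c by (intro exI[of _ b] exI[of _ c] exI[of _ a]) auto
  qed
qed

lemma mob_spec_low:
  fixes x0 :: "'v::finite \<Rightarrow> complex"
  assumes "k \<noteq> i" "j \<le> 3"
  shows "mob i x0 (spec x0 i j u) k = spec x0 i j u 2 * x0 k + spec x0 i j u 1"
proof -
  have "spec x0 i j u 3 = 0" using assms(2) by (simp add: spec_def)
  then show ?thesis using assms(1) by (simp add: mob_k)
qed

lemma spec_eval:
  "spec x0 i j u n = (if n < j then u n else if n = 0 then x0 i else if n = 2 then 1 else 0)"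
  by (simp add: spec_def)

lemma big_chain:
  fixes x0 :: "'v::finite \<Rightarrow> complex"
  assumes card: "card (UNIV :: 'v set) \<ge> 4" and dist: "distinct_pts x0"
    and good: "\<And>u. u 2 - u 1 * u 3 \<noteq> 0 \<Longrightarrow> (\<forall>l. l \<noteq> i \<longrightarrow> u 3 * x0 l + 1 \<noteq> 0) \<Longrightarrow>
                 (\<forall>k. k \<noteq> i \<longrightarrow> u 0 \<noteq> mob i x0 u k) \<Longrightarrow> mob i x0 u \<in> S"
  shows "\<exists>Z. zchain S Z 4"
proof -
  obtain k1 k2 k3 where ks: "k1 \<noteq> i" "k2 \<noteq> i" "k3 \<noteq> i" "k1 \<noteq> k2" "k1 \<noteq> k3" "k2 \<noteq> k3" "x0 k3 \<noteq> 0"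
    using three_pts[OF card dist, of i] by blast
  define FF where "FF j = (\<lambda>u. mob i x0 (spec x0 i j u))" for j
  define Z where "Z j = zcl (range (FF j))" for j
  have irr: "zirred (Z j)" for j
    unfolding Z_def FF_def by (rule zirred_image[OF pmap_spec_mob])
  have rng: "range (FF j) \<subseteq> range (FF (Suc j))" for j
    unfolding FF_def by (rule range_spec)
  have pm: "poly_fun (\<lambda>u. mob i x0 u k)" for k using pmap_mob[of i x0] unfolding pmap_def by blast
  have xd: "x0 k1 - x0 k2 \<noteq> 0" "x0 k2 - x0 k1 \<noteq> 0" using dist ks unfolding distinct_pts_def by auto
  have st0: "Z 0 \<subset> Z (Suc 0)"
    unfolding Z_def
  proof (rule strict_step[OF rng, where g = "\<lambda>y. y i - x0 i" and ua = "\<lambda>_. x0 i + 1"])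
    show "poly_fun (\<lambda>y. y i - x0 i)" by (intro poly_fun_diff poly_fun.pvar poly_fun.pconst)
    show "(\<lambda>y. y i - x0 i) (FF 0 u) = 0" for u by (simp add: FF_def spec_eval)
    show "(\<lambda>y. y i - x0 i) (FF (Suc 0) (\<lambda>_. x0 i + 1)) \<noteq> 0" by (simp add: FF_def spec_eval)
  qed
  have st1: "Z 1 \<subset> Z (Suc 1)"
    unfolding Z_def
  proof (rule strict_step[OF rng, where g = "\<lambda>y. y k1 - x0 k1" and ua = "\<lambda>_. 1"])
    show "poly_fun (\<lambda>y. y k1 - x0 k1)" by (intro poly_fun_diff poly_fun.pvar poly_fun.pconst)
    show "(\<lambda>y. y k1 - x0 k1) (FF 1 u) = 0" for u using ks by (simp add: FF_def mob_spec_low spec_eval)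
    show "(\<lambda>y. y k1 - x0 k1) (FF (Suc 1) (\<lambda>_. 1)) \<noteq> 0" using ks by (simp add: FF_def mob_spec_low spec_eval)
  qed
  have st2: "Z 2 \<subset> Z (Suc 2)"
    unfolding Z_def
  proof (rule strict_step[OF rng, where g = "\<lambda>y. (y k1 - y k2) - (x0 k1 - x0 k2)" and ua = "\<lambda>_. 2"])
    show "poly_fun (\<lambda>y. (y k1 - y k2) - (x0 k1 - x0 k2))" by (intro poly_fun_diff poly_fun.pvar poly_fun.pconst)
    show "(\<lambda>y. (y k1 - y k2) - (x0 k1 - x0 k2)) (FF 2 u) = 0" for u using ks by (simp add: FF_def mob_spec_low spec_eval)
    have "(\<lambda>y. (y k1 - y k2) - (x0 k1 - x0 k2)) (FF (Suc 2) (\<lambda>_. 2)) = x0 k1 - x0 k2"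
      using ks by (simp add: FF_def mob_spec_low spec_eval algebra_simps)
    then show "(\<lambda>y. (y k1 - y k2) - (x0 k1 - x0 k2)) (FF (Suc 2) (\<lambda>_. 2)) \<noteq> 0" using xd(1) by (simp only: not_False_eq_True)
  qed
  define g3 where "g3 = (\<lambda>y::'v \<Rightarrow> complex. (x0 k2 * y k3 - x0 k3 * y k2) - (x0 k1 * y k3 - x0 k3 * y k1) + (x0 k1 * y k2 - x0 k2 * y k1))"
  define uu where "uu = (\<lambda>n::nat. if n = 3 then - 1 / x0 k3 else if n = 1 then 0 else (1::complex))"
  have st3: "Z 3 \<subset> Z (Suc 3)"
    unfolding Z_def
  proof (rule strict_step[OF rng, where g = g3 and ua = uu])
    show "poly_fun g3" unfolding g3_def by (intro poly_fun_diff poly_fun.padd poly_fun.pmult poly_fun.pvar poly_fun.pconst)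
    show "g3 (FF 3 u) = 0" for u using ks by (simp add: g3_def FF_def mob_spec_low spec_eval algebra_simps)
    have sp: "mob i x0 (spec x0 i (Suc 3) uu) = mob i x0 uu" unfolding mob_def spec_def by simp
    have f3: "uu 3 * x0 k3 + 1 = 0" using ks(7) by (simp add: uu_def)
    have "(\<Prod>l\<in>UNIV - {i, k1}. uu 3 * x0 l + 1) = 0" using ks f3 by (intro prod_zero) auto
    then have y1: "mob i x0 uu k1 = 0" using ks by (simp add: mob_k)
    have "(\<Prod>l\<in>UNIV - {i, k2}. uu 3 * x0 l + 1) = 0" using ks f3 by (intro prod_zero) auto
    then have y2: "mob i x0 uu k2 = 0" using ks by (simp add: mob_k)
    have "uu 3 * x0 l + 1 \<noteq> 0" if "l \<noteq> k3" for l
    proof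
      assume "uu 3 * x0 l + 1 = 0"
      then have "x0 l = x0 k3" using ks(7) by (simp add: uu_def field_simps)
      then show False using that dist unfolding distinct_pts_def by blast
    qed
    then have "(\<Prod>l\<in>UNIV - {i, k3}. uu 3 * x0 l + 1) \<noteq> 0" by (simp add: prod_zero_iff)
    moreover have "uu 2 * x0 k3 + uu 1 \<noteq> 0" using ks(7) by (simp add: uu_def)
    ultimately have y3: "mob i x0 uu k3 \<noteq> 0" using ks by (simp add: mob_k)
    have "g3 (FF (Suc 3) uu) = (x0 k2 - x0 k1) * mob i x0 uu k3"
      unfolding FF_def sp g3_def using y1 y2 by (simp add: algebra_simps)
    then show "g3 (FF (Suc 3) uu) \<noteq> 0" using xd y3 by simp
  qed
  define h where "h = (\<lambda>u. (u 2 - u 1 * u 3) * (\<Prod>l\<in>UNIV - {i}. u 3 * x0 l + 1)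
                        * (\<Prod>k\<in>UNIV - {i}. u 0 - mob i x0 u k))"
  have ph: "poly_fun h" unfolding h_def
    by (intro poly_fun.pmult poly_fun_diff poly_fun_prod poly_fun.padd poly_fun.pvar poly_fun.pconst pm) auto
  define u0 where "u0 = (\<lambda>n::nat. if n = 0 then x0 i else if n = 2 then 1 else (0::complex))"
  have m0: "mob i x0 u0 k = x0 k" if "k \<noteq> i" for k using that by (simp add: mob_k u0_def)
  have "(\<Prod>k\<in>UNIV - {i}. u0 0 - mob i x0 u0 k) \<noteq> 0"
  proof -
    have "u0 0 - mob i x0 u0 k \<noteq> 0" if "k \<in> UNIV - {i}" for k
      using that m0[of k] dist unfolding distinct_pts_def by (simp add: u0_def)
    then show ?thesis by (simp add: prod_zero_iff)
  qed
  then have hu0: "h u0 \<noteq> 0" unfolding h_def by (simp add: u0_def)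
  have hgood: "u \<in> mob i x0 -` zcl S" if "h u \<noteq> 0" for u
  proof -
    have "u 2 - u 1 * u 3 \<noteq> 0" using that unfolding h_def by auto
    moreover have "\<forall>l. l \<noteq> i \<longrightarrow> u 3 * x0 l + 1 \<noteq> 0" using that unfolding h_def by (auto simp: prod_zero_iff)
    moreover have "\<forall>k. k \<noteq> i \<longrightarrow> u 0 \<noteq> mob i x0 u k" using that unfolding h_def by (auto simp: prod_zero_iff)
    ultimately have "mob i x0 u \<in> S" by (rule good)
    then show ?thesis using zcl_sub by blast
  qed
  have "mob i x0 -` zcl S = UNIV"
    by (rule dense_open[OF zclosed_vimage[OF zclosed_zcl pmap_mob] ph hu0 hgood])
  then have "range (mob i x0) \<subseteq> zcl S" by auto
  then have "zcl (range (mob i x0)) \<subseteq> zcl S" by (rule zcl_least[OF zclosed_zcl])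
  moreover have "Z 4 \<subseteq> zcl (range (mob i x0))" unfolding Z_def FF_def by (rule zcl_mono) auto
  ultimately have sub: "Z 4 \<subseteq> zcl S" by blast
  have st: "Z j \<subset> Z (Suc j)" if "j < 4" for j
  proof -
    have "j = 0 \<or> j = 1 \<or> j = 2 \<or> j = 3" using that by auto
    then show ?thesis using st0 st1 st2 st3 by auto
  qed
  have "zchain S Z 4" unfolding zchain_def using irr st sub by blast
  then show ?thesis by blast
qed



theorem mainTheorem6:
  fixes G :: "'v::finite set set"
  assumes "card (UNIV :: 'v set) \<ge> 4"
    and "simple_graph G"
    and "geometrically_copious G"
  shows "\<forall>i. degree G i \<ge> 3"
proof (rule ccontr)
  assume "\<not> (\<forall>i. degree G i \<ge> 3)"
  then obtain i where "\<not> degree G i \<ge> 3" by blast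
  then have deg: "degree G i < 3" by (simp only: not_le)
  have "\<exists>f. poly_fun f \<and> (\<exists>s0\<in>kin_cone G. (\<exists>e. s0 e \<noteq> 0) \<and> f s0 \<noteq> 0) \<and>
          (\<forall>s\<in>kin_cone G. (\<exists>e. s e \<noteq> 0) \<longrightarrow> f s \<noteq> 0 \<longrightarrow> has_pdim (scat_fiber G s) 2)"
    using assms(3) unfolding geometrically_copious_def by (rule conjunct2)
  then obtain f where fall: "poly_fun f \<and> (\<exists>s0\<in>kin_cone G. (\<exists>e. s0 e \<noteq> 0) \<and> f s0 \<noteq> 0) \<and>
          (\<forall>s\<in>kin_cone G. (\<exists>e. s e \<noteq> 0) \<longrightarrow> f s \<noteq> 0 \<longrightarrow> has_pdim (scat_fiber G s) 2)"
    by (rule exE)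
  have f1: "\<exists>s0\<in>kin_cone G. (\<exists>e. s0 e \<noteq> 0) \<and> f s0 \<noteq> 0" using fall by (rule conjunct1[OF conjunct2])
  have hf: "\<forall>s\<in>kin_cone G. (\<exists>e. s e \<noteq> 0) \<longrightarrow> f s \<noteq> 0 \<longrightarrow> has_pdim (scat_fiber G s) 2"
    using fall by (rule conjunct2[OF conjunct2])
  from f1 obtain s0 where s0: "s0 \<in> kin_cone G" "\<exists>e. s0 e \<noteq> 0" "f s0 \<noteq> 0"
    by blast
  define S where "S = scat_fiber G s0"
  have "has_pdim S 2" unfolding S_def using hf s0 by simp
  then have hz: "has_zdim S (Suc 2)" by (simp only: has_pdim_def)
  then obtain Z where zc: "zchain S Z (Suc 2)" unfolding has_zdim_def by (elim conjE exE)
  have n4: "\<not> (\<exists>Z. zchain S Z (Suc (Suc 2)))" using hz unfolding has_zdim_def by (rule conjunct2)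
  have e4: "Suc (Suc 2) = (4::nat)" by simp
  have no4: "\<not> (\<exists>Z. zchain S Z 4)" using n4 unfolding e4 .
  have e3: "Suc 2 = (3::nat)" by simp
  have zc: "zchain S Z 3" using zc unfolding e3 .
  have "Z 3 \<noteq> {}" "Z 3 \<subseteq> zcl S" using zc unfolding zchain_def zirred_def by auto
  then have "zcl S \<noteq> {}" by blast
  then have "S \<noteq> {}" using zcl_empty by metis
  then obtain x0 where x0: "x0 \<in> scat_fiber G s0" unfolding S_def by blast
  have dist: "distinct_pts x0" using x0 by (simp add: scat_fiber_def)
  have ez: "\<And>m. s0 {i, m} = 0" using edge_zero[OF assms(2) s0(1) x0 deg] .
  have "\<exists>Z. zchain S Z 4"
  proof (rule big_chain[OF assms(1) dist, of i])
    fix u :: "nat \<Rightarrow> complex"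
    assume "u 2 - u 1 * u 3 \<noteq> 0" "\<forall>l. l \<noteq> i \<longrightarrow> u 3 * x0 l + 1 \<noteq> 0"
      "\<forall>k. k \<noteq> i \<longrightarrow> u 0 \<noteq> mob i x0 u k"
    then show "mob i x0 u \<in> S" unfolding S_def
      by (intro mob_in_fiber[OF assms(2) s0(1) x0 ez]) auto
  qed
  then show False using no4 by blast
qed

end
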